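(* Let $B$ be a blueprint and $\sim$ a congruence on $B$. Then the absorbing ideal $I_\sim=\{e\in B: eb\sim e\text{ for all }b\in B\}$ is an ideal of $B$. Moreover, $I_\sim$ is either empty or an equivalence class of $\sim$.
   Context: A monoid is a commutative semigroup $A$, written multiplicatively, with neutral element $1$. For a monoid $A$, $\mathbb N[A]$ denotes the semiring of finite formal sums $\sum a_i$ of elements $a_i\in A$ (repetitions allowed), with empty sum $\underline0$ and multiplication extended bilinearly from $A$. A pre-addition on $A$ is a relation $\mathcal R\subseteq\mathbb N[A]\times\mathbb N[A]$, written $\sum a_i\equiv\sum b_j$, which is an equivalence relation and satisfies: if $\sum a_i\equiv\sum b_j$ and $\sum c_k\equiv\sum d_l$, then $\sum a_i+\sum c_k\equiv\sum b_j+\sum d_l$ and $\sum_{i,k}a_ic_k\equiv\sum_{j,l}b_jd_l$. A blueprint $B=(A,\mathcal R)$ is a monoid $A$ with a pre-addition $\mathcal R$; we write $a\in B$ for $a\in A$. An element $e$ with $e\equiv\underline0$ is a zero of $B$. For an equivalence relation $\sim$ on $A$, its linear extension $\sim_{\mathbb N}$ is the equivalence relation on $\mathbb N[A]$ generated by $\sum_{i=1}^n a_i\sim_{\mathbb N}\sum_{i=1}^n b_i$ whenever $a_i\sim b_i$ for all $i$; and $\sim_{\mathcal R}$ is the smallest equivalence relation on $\mathbb N[A]$ containing both $\mathcal R$ and $\sim_{\mathbb N}$. A congruence on $B$ is an equivalence relation $\sim$ on $A$ such that (C1) $\sim_{\mathbb N}$ is a pre-addition on $A$, and (C2) the restriction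 of $\sim_{\mathcal R}$ to $A$ equals $\sim$. For a subset $I\subseteq B$, let $\sim^I$ be the equivalence relation on $A$ with $a\sim^I b$ iff $a=b$ or $a,b\in I$, and let $\sim_I$ be the relation on $A$ with $a\sim_I b$ iff there is a finite sequence $a\equiv\sum_k c_{1,k}\sim^I_{\mathbb N}\sum_k d_{1,k}\equiv\sum_k c_{2,k}\sim^I_{\mathbb N}\cdots\sim^I_{\mathbb N}\sum_k d_{n,k}\equiv b$ with $c_{i,k},d_{i,k}\in A$. An ideal of $B$ is a subset $I\subseteq B$ such that (I1) $ab\in I$ for all $a\in I$, $b\in B$; (I2) every zero of $B$ lies in $I$; (I3) if $a\sim_I b$ and $b\in I$, then $a\in I$. *)

theory Defs
  imports "HOL-Library.Multiset"
begin

(* The monoid A is modelled as a type 'a of class comm_monoid_mult (every element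
   of the type is an element of A). N[A] is 'a multiset; formal sum is multiset
   union (+), the empty sum is {#}, and an element a is the one-term sum {#a#}. *)

definition nmult :: "'a::comm_monoid_mult multiset \<Rightarrow> 'a multiset \<Rightarrow> 'a multiset" where
  "nmult M N = (\<Sum>a\<in>#M. \<Sum>c\<in>#N. {#a * c#})"

definition pre_addition :: "('a::comm_monoid_mult multiset \<times> 'a multiset) set \<Rightarrow> bool" where
  "pre_addition R \<longleftrightarrow> equiv UNIV R \<and>
     (\<forall>x y z w. (x, y) \<in> R \<longrightarrow> (z, w) \<in> R \<longrightarrow>
        (x + z, y + w) \<in> R \<and> (nmult x z, nmult y w) \<in> R)"

definition equiv_closure :: "('b \<times> 'b) set \<Rightarrow> ('b \<times> 'b) set" where
  "equiv_closure S = (S \<union> S\<inverse>)\<^sup>*"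

(* linear extension of a relation on A: generated by (sum a_i, sum b_i) with a_i ~ b_i *)
definition lin_ext :: "('a \<times> 'a) set \<Rightarrow> ('a multiset \<times> 'a multiset) set" where
  "lin_ext r = equiv_closure
     {(image_mset fst P, image_mset snd P) | P. set_mset P \<subseteq> r}"

definition sim_R :: "('a::comm_monoid_mult multiset \<times> 'a multiset) set \<Rightarrow> ('a \<times> 'a) set
     \<Rightarrow> ('a multiset \<times> 'a multiset) set" where
  "sim_R R r = equiv_closure (R \<union> lin_ext r)"

definition congruence :: "('a::comm_monoid_mult multiset \<times> 'a multiset) set \<Rightarrow> ('a \<times> 'a) set \<Rightarrow> bool" where
  "congruence R r \<longleftrightarrow> equiv UNIV r \<and> pre_addition (lin_ext r) \<and>
     {(a, b). ({#a#}, {#b#}) \<in> sim_R R r} = r"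

definition is_zero :: "('a::comm_monoid_mult multiset \<times> 'a multiset) set \<Rightarrow> 'a \<Rightarrow> bool" where
  "is_zero R e \<longleftrightarrow> ({#e#}, {#}) \<in> R"

definition simI :: "'a set \<Rightarrow> ('a \<times> 'a) set" where
  "simI I = {(a, b). a = b \<or> (a \<in> I \<and> b \<in> I)}"

(* a ~_I b: a == S c1 ~^I_N S d1 == S c2 ~^I_N ... ~^I_N S dn == b, n >= 1 *)
definition sim_ideal :: "('a::comm_monoid_mult multiset \<times> 'a multiset) set \<Rightarrow> 'a set \<Rightarrow> ('a \<times> 'a) set" where
  "sim_ideal R I = {(a, b). ({#a#}, {#b#}) \<in> R O (lin_ext (simI I) O R)\<^sup>+}"

definition is_ideal :: "('a::comm_monoid_mult multiset \<times> 'a multiset) set \<Rightarrow> 'a set \<Rightarrow> bool" where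
  "is_ideal R I \<longleftrightarrow>
     (\<forall>a b. a \<in> I \<longrightarrow> a * b \<in> I) \<and>
     (\<forall>e. is_zero R e \<longrightarrow> e \<in> I) \<and>
     (\<forall>a b. (a, b) \<in> sim_ideal R I \<longrightarrow> b \<in> I \<longrightarrow> a \<in> I)"

definition absorbing_ideal :: "('a::comm_monoid_mult \<times> 'a) set \<Rightarrow> 'a set" where
  "absorbing_ideal r = {e. \<forall>b. (e * b, e) \<in> r}"

end

theory Submission
  imports Defs
begin

lemma ec_sub: "S \<subseteq> equiv_closure S"
  unfolding equiv_closure_def by auto

lemma ec_mono: "S \<subseteq> T \<Longrightarrow> equiv_closure S \<subseteq> equiv_closure T"
  unfolding equiv_closure_def by (intro rtrancl_mono) auto

lemma lin_ext_mono: "r \<subseteq> s \<Longrightarrow> lin_ext r \<subseteq> lin_ext s"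
  unfolding lin_ext_def by (intro ec_mono) blast

lemma lin_ext_single: "(a, b) \<in> r \<Longrightarrow> ({#a#}, {#b#}) \<in> lin_ext r"
proof -
  assume h: "(a, b) \<in> r"
  let ?P = "{#(a,b)#}"
  have e: "({#a#}, {#b#}) = (image_mset fst ?P, image_mset snd ?P)" by simp
  have "set_mset ?P \<subseteq> r" using h by simp
  hence "({#a#}, {#b#}) \<in> {(image_mset fst P, image_mset snd P) | P. set_mset P \<subseteq> r}"
    using e by blast
  hence "({#a#}, {#b#}) \<in> equiv_closure {(image_mset fst P, image_mset snd P) | P. set_mset P \<subseteq> r}"
    by (rule subsetD[OF ec_sub])
  thus ?thesis unfolding lin_ext_def .
qed

lemma simR_R: "R \<subseteq> sim_R R r"
  unfolding sim_R_def using ec_sub by blast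

lemma simR_L: "lin_ext r \<subseteq> sim_R R r"
  unfolding sim_R_def using ec_sub by blast

lemma simR_trans: "(x, y) \<in> sim_R R r \<Longrightarrow> (y, z) \<in> sim_R R r \<Longrightarrow> (x, z) \<in> sim_R R r"
  unfolding sim_R_def equiv_closure_def by (meson rtrancl_trans)

lemma simR_sym: "(x, y) \<in> sim_R R r \<Longrightarrow> (y, x) \<in> sim_R R r"
  unfolding sim_R_def equiv_closure_def
proof -
  let ?T = "R \<union> lin_ext r"
  assume "(x, y) \<in> (?T \<union> ?T\<inverse>)\<^sup>*"
  hence "(y, x) \<in> ((?T \<union> ?T\<inverse>)\<inverse>)\<^sup>*" by (rule rtrancl_converseI)
  moreover have "(?T \<union> ?T\<inverse>)\<inverse> = ?T \<union> ?T\<inverse>" by auto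
  ultimately show "(y, x) \<in> (?T \<union> ?T\<inverse>)\<^sup>*" by simp
qed

lemma nmult_single: "nmult {#a#} {#b#} = {#a * b#}"
  by (simp add: nmult_def)

lemma nmult_empty: "nmult {#} N = {#}"
  by (simp add: nmult_def)

lemma cong_mult:
  assumes c: "congruence R r" and ab: "(a, b) \<in> r"
  shows "(a * c, b * c) \<in> r"
proof -
  from c have eq: "equiv UNIV r" and pa: "pre_addition (lin_ext r)"
    and cl: "{(a, b). ({#a#}, {#b#}) \<in> sim_R R r} = r" by (auto simp: congruence_def)
  have "(c, c) \<in> r" using eq by (simp add: equiv_def refl_on_def)
  hence "({#c#}, {#c#}) \<in> lin_ext r" by (rule lin_ext_single)
  moreover have "({#a#}, {#b#}) \<in> lin_ext r" using ab by (rule lin_ext_single)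
  ultimately have "(nmult {#a#} {#c#}, nmult {#b#} {#c#}) \<in> lin_ext r"
    using pa unfolding pre_addition_def by blast
  hence "({#a*c#}, {#b*c#}) \<in> sim_R R r" using simR_L by (auto simp: nmult_single)
  thus ?thesis using cl by blast
qed

theorem mainTheorem10:
  fixes R :: "('a::comm_monoid_mult multiset \<times> 'a multiset) set"
    and r :: "('a \<times> 'a) set"
  assumes "pre_addition R"
    and "congruence R r"
  shows "is_ideal R (absorbing_ideal r) \<and>
         (absorbing_ideal r = {} \<or> absorbing_ideal r \<in> UNIV // r)"
proof -
  let ?I = "absorbing_ideal r"
  have eq: "equiv UNIV r" and cl: "{(a, b). ({#a#}, {#b#}) \<in> sim_R R r} = r"
    using assms(2) by (auto simp: congruence_def)
  have sym: "\<And>x y. (x, y) \<in> r \<Longrightarrow> (y, x) \<in> r" using eq by (meson equivE symE)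
  have tr: "\<And>x y z. (x, y) \<in> r \<Longrightarrow> (y, z) \<in> r \<Longrightarrow> (x, z) \<in> r" using eq by (meson equivE transE)
  have rf: "\<And>x. (x, x) \<in> r" using eq by (simp add: equiv_def refl_on_def)
  have memI: "\<And>e. e \<in> ?I \<longleftrightarrow> (\<forall>b. (e * b, e) \<in> r)" by (simp add: absorbing_ideal_def)
  have I1: "\<And>a b. a \<in> ?I \<Longrightarrow> a * b \<in> ?I"
  proof -
    fix a b assume "a \<in> ?I"
    hence h: "\<And>c. (a * c, a) \<in> r" using memI by blast
    show "a * b \<in> ?I" unfolding memI
    proof
      fix c
      have "(a * b * c, a) \<in> r" using h[of "b*c"] by (simp add: mult.assoc)
      thus "(a * b * c, a * b) \<in> r" using sym[OF h[of b]] tr by blast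
    qed
  qed
  have I2: "\<And>e. is_zero R e \<Longrightarrow> e \<in> ?I"
  proof -
    fix e assume z: "is_zero R e"
    show "e \<in> ?I" unfolding memI
    proof
      fix b
      have "({#b#}, {#b#}) \<in> R" using assms(1) unfolding pre_addition_def
        by (simp add: equiv_def refl_on_def)
      moreover have "({#e#}, {#}) \<in> R" using z by (simp add: is_zero_def)
      ultimately have "(nmult {#e#} {#b#}, nmult {#} {#b#}) \<in> R"
        using assms(1) unfolding pre_addition_def by blast
      hence "({#e*b#}, {#}) \<in> sim_R R r" using simR_R by (auto simp: nmult_single nmult_empty)
      moreover have "({#}, {#e#}) \<in> sim_R R r"
      proof -
        have "({#e#}, {#}) \<in> sim_R R r" using simR_R z by (auto simp: is_zero_def)
        thus ?thesis by (rule simR_sym)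
      qed
      ultimately have "({#e*b#}, {#e#}) \<in> sim_R R r" by (rule simR_trans)
      thus "(e * b, e) \<in> r" using cl by blast
    qed
  qed
  have Irel: "\<And>e f. e \<in> ?I \<Longrightarrow> f \<in> ?I \<Longrightarrow> (e, f) \<in> r"
  proof -
    fix e f assume "e \<in> ?I" "f \<in> ?I"
    hence "(e * f, e) \<in> r" "(f * e, f) \<in> r" using memI by blast+
    thus "(e, f) \<in> r" using sym tr by (metis mult.commute)
  qed
  have closed: "\<And>a b. (a, b) \<in> r \<Longrightarrow> b \<in> ?I \<Longrightarrow> a \<in> ?I"
  proof -
    fix a b assume ab: "(a, b) \<in> r" and b: "b \<in> ?I"
    show "a \<in> ?I" unfolding memI
    proof
      fix c
      have "(a * c, b * c) \<in> r" using cong_mult[OF assms(2) ab] .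
      moreover have "(b * c, b) \<in> r" using b memI by blast
      ultimately have "(a * c, b) \<in> r" by (rule tr)
      thus "(a * c, a) \<in> r" using tr sym[OF ab] by blast
    qed
  qed
  have simI_sub: "simI ?I \<subseteq> r" using Irel rf by (auto simp: simI_def)
  have S: "lin_ext (simI ?I) \<subseteq> sim_R R r"
    using lin_ext_mono[OF simI_sub] simR_L by blast
  have tc: "(lin_ext (simI ?I) O R)\<^sup>+ \<subseteq> sim_R R r"
  proof
    fix p assume "p \<in> (lin_ext (simI ?I) O R)\<^sup>+"
    obtain x y where p: "p = (x, y)" by (cases p)
    have "(x, y) \<in> (lin_ext (simI ?I) O R)\<^sup>+" using \<open>p \<in> _\<close> p by simp
    then have "(x, y) \<in> sim_R R r"
    proof (induction rule: trancl_induct)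
      case (base y)
      then obtain u where "(x, u) \<in> lin_ext (simI ?I)" "(u, y) \<in> R" by blast
      thus ?case using S simR_R simR_trans[of x u R r y] by blast
    next
      case (step y z)
      then obtain u where "(y, u) \<in> lin_ext (simI ?I)" "(u, z) \<in> R" by blast
      hence "(y, z) \<in> sim_R R r" using S simR_R simR_trans[of y u R r z] by blast
      thus ?case using step.IH simR_trans by blast
    qed
    thus "p \<in> sim_R R r" using p by simp
  qed
  have I3: "\<And>a b. (a, b) \<in> sim_ideal R ?I \<Longrightarrow> b \<in> ?I \<Longrightarrow> a \<in> ?I"
  proof -
    fix a b assume ab: "(a, b) \<in> sim_ideal R ?I" and b: "b \<in> ?I"
    hence "({#a#}, {#b#}) \<in> R O (lin_ext (simI ?I) O R)\<^sup>+" by (simp add: sim_ideal_def)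
    then obtain u where "({#a#}, u) \<in> R" "(u, {#b#}) \<in> (lin_ext (simI ?I) O R)\<^sup>+" by blast
    hence "({#a#}, {#b#}) \<in> sim_R R r" using tc simR_R simR_trans[of "{#a#}" u R r "{#b#}"] by blast
    hence "(a, b) \<in> r" using cl by blast
    thus "a \<in> ?I" using closed b by blast
  qed
  have part1: "is_ideal R ?I" unfolding is_ideal_def using I1 I2 I3 by blast
  have part2: "?I = {} \<or> ?I \<in> UNIV // r"
  proof (cases "?I = {}")
    case False
    then obtain e where e: "e \<in> ?I" by blast
    have "?I = r `` {e}"
    proof
      show "?I \<subseteq> r `` {e}" using Irel e by blast
      show "r `` {e} \<subseteq> ?I"
      proof
        fix f assume "f \<in> r `` {e}"
        hence "(e, f) \<in> r" by simp
        thus "f \<in> ?I" using closed[OF sym e] by blast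
      qed
    qed
    thus ?thesis by (auto intro: quotientI)
  qed simp
  show ?thesis using part1 part2 by blast
qed

end
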